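(* Let $X$ be a real Banach space which is an $L$-summand in its bidual, and let $Y$ be a (closed linear) subspace of $X$ which is also an $L$-summand in its bidual. Then $(X,Y,\mathcal{F}(X))$ has weak-$\mathscr{F}_{cwmc}$-SACP, where $\mathcal{F}(X)$ is the family of nonempty finite subsets of $X$ and $\mathscr{F}_{cwmc}$ is the class of all convex, weakly strictly monotone, coercive functions $f:[0,\infty)^N\to[0,\infty)$ (for $F\in\mathcal{F}(X)$ with $card(F)=N$).
   Context: A linear projection $P$ on a Banach space $Z$ is an $L$-projection if $\|z\|=\|Pz\|+\|z-Pz\|$ for all $z$; $Z$ is an $L$-summand in its bidual ($L$-embedded) if its canonical image in $Z^{**}$ is the range of an $L$-projection on $Z^{**}$. On $[0,\infty)^N$ with coordinatewise order, $f$ is monotone if $a\le b$ implies $f(a)\le f(b)$; weakly strictly monotone if monotone and $a_i<b_i$ for all $i$ implies $f(a)<f(b)$; coercive if $f(a)\to\infty$ as $\max_i a_i\to\infty$. For $F=\{x_1,\dots,x_N\}$, $r_f(x,F)=f(\|x-x_1\|,\dots,\|x-x_N\|)$, $\mathrm{rad}_Y^f(F)=\inf_{y\in Y}r_f(y,F)$. Weak-$\mathscr{F}$-SACP: for every $F$, every $f\in\mathscr{F}$ and every sequence $(y_n)\subseteq Y$ with $r_f(y_n,F)\to\mathrm{rad}_Y^f(F)$, $(y_n)$ has a weakly convergent subsequence. *)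

theory Defs
  imports "HOL-Analysis.Analysis"
begin

definition canon_bidual :: "'a::banach \<Rightarrow> (('a \<Rightarrow>\<^sub>L real) \<Rightarrow>\<^sub>L real)" where
  "canon_bidual x = Blinfun (\<lambda>\<phi>. blinfun_apply \<phi> x)"

definition L_projection :: "('z::real_normed_vector \<Rightarrow> 'z) \<Rightarrow> bool" where
  "L_projection P \<longleftrightarrow> linear P \<and> (\<forall>z. P (P z) = P z)
      \<and> (\<forall>z. norm z = norm (P z) + norm (z - P z))"

definition L_embedded :: "'a::banach itself \<Rightarrow> bool" where
  "L_embedded _ \<longleftrightarrow>
     (\<exists>P :: (('a \<Rightarrow>\<^sub>L real) \<Rightarrow>\<^sub>L real) \<Rightarrow> (('a \<Rightarrow>\<^sub>L real) \<Rightarrow>\<^sub>L real).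
        L_projection P \<and> range P = range (canon_bidual :: 'a \<Rightarrow> _))"

definition weakly_converges_to :: "(nat \<Rightarrow> 'a::real_normed_vector) \<Rightarrow> 'a \<Rightarrow> bool" where
  "weakly_converges_to u x \<longleftrightarrow> (\<forall>\<phi> :: 'a \<Rightarrow>\<^sub>L real. (\<lambda>n. \<phi> (u n)) \<longlonglongrightarrow> \<phi> x)"

text \<open>The positive cone [0,\<infinity>)^N, realised as functions nat \<Rightarrow> real vanishing from N on.\<close>
definition cone :: "nat \<Rightarrow> (nat \<Rightarrow> real) set" where
  "cone N = {a. (\<forall>i<N. 0 \<le> a i) \<and> (\<forall>i\<ge>N. a i = 0)}"

text \<open>The class F_cwmc of functions f : [0,\<infinity>)^N \<rightarrow> [0,\<infinity>) that are convex,
  weakly strictly monotone and coercive (only values on cone N matter).\<close>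
definition F_cwmc :: "nat \<Rightarrow> ((nat \<Rightarrow> real) \<Rightarrow> real) \<Rightarrow> bool" where
  "F_cwmc N f \<longleftrightarrow>
     (\<forall>a\<in>cone N. 0 \<le> f a)
   \<and> (\<forall>a\<in>cone N. \<forall>b\<in>cone N. \<forall>t::real. 0 \<le> t \<and> t \<le> 1 \<longrightarrow>
          f (\<lambda>i. t * a i + (1 - t) * b i) \<le> t * f a + (1 - t) * f b)
   \<and> (\<forall>a\<in>cone N. \<forall>b\<in>cone N. (\<forall>i<N. a i \<le> b i) \<longrightarrow> f a \<le> f b)
   \<and> (\<forall>a\<in>cone N. \<forall>b\<in>cone N. (\<forall>i<N. a i < b i) \<longrightarrow> f a < f b)
   \<and> (\<forall>M::real. \<exists>R::real. \<forall>a\<in>cone N. (\<exists>i<N. R \<le> a i) \<longrightarrow> M \<le> f a)"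

text \<open>r_f(x,F) for F enumerated by the distinct list xs (N = length xs).\<close>
definition r_f :: "((nat \<Rightarrow> real) \<Rightarrow> real) \<Rightarrow> 'a::real_normed_vector \<Rightarrow> 'a list \<Rightarrow> real" where
  "r_f f x xs = f (\<lambda>i. if i < length xs then norm (x - xs ! i) else 0)"

definition rad_f :: "((nat \<Rightarrow> real) \<Rightarrow> real) \<Rightarrow> 'a::real_normed_vector set \<Rightarrow> 'a list \<Rightarrow> real" where
  "rad_f f Y xs = (INF y\<in>Y. r_f f y xs)"

definition weak_cwmc_SACP :: "'a::real_normed_vector set \<Rightarrow> bool" where
  "weak_cwmc_SACP Y \<longleftrightarrow>
     (\<forall>xs :: 'a list. \<forall>f. \<forall>u :: nat \<Rightarrow> 'a.
        xs \<noteq> [] \<and> distinct xs \<and> F_cwmc (length xs) f \<and> (\<forall>n. u n \<in> Y)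
        \<and> (\<lambda>n. r_f f (u n) xs) \<longlonglongrightarrow> rad_f f Y xs
        \<longrightarrow> (\<exists>s x. strict_mono s \<and> weakly_converges_to (u \<circ> s) x))"

end

theory Submission
  imports Defs "HOL-Library.Diagonal_Subsequence"
begin

definition hb_ok :: "real \<Rightarrow> ('a::real_normed_vector \<times> real) set \<Rightarrow> bool" where
"hb_ok C G \<longleftrightarrow> (\<forall>x a y b. (x,a)\<in>G \<longrightarrow> (y,b)\<in>G \<longrightarrow> (x+y,a+b)\<in>G)
   \<and> (\<forall>x a c. (x,a)\<in>G \<longrightarrow> (c *\<^sub>R x, c*a)\<in>G) \<and> (\<forall>x a. (x,a)\<in>G \<longrightarrow> a \<le> C * norm x)"

lemma hb_ok_fun:
  assumes "hb_ok C G" "(x,a)\<in>G" "(x,b)\<in>G" shows "a = b"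
proof -
  have "(x + (-1) *\<^sub>R x, a + (-1)*b) \<in> G" "(x + (-1) *\<^sub>R x, b + (-1)*a) \<in> G"
    using assms unfolding hb_ok_def by blast+
  hence "a - b \<le> 0" "b - a \<le> 0" using assms(1) unfolding hb_ok_def by force+
  thus ?thesis by simp
qed

lemma hb_extend:
  assumes ok: "hb_ok C M" and ne: "M \<noteq> {}" and C: "0 \<le> C" and x0: "\<forall>a. (x0,a) \<notin> M"
  shows "\<exists>M'. hb_ok C M' \<and> M \<subseteq> M' \<and> M' \<noteq> M"
proof -
  have add: "\<And>x a y b. (x,a)\<in>M \<Longrightarrow> (y,b)\<in>M \<Longrightarrow> (x+y,a+b)\<in>M"
   and scl: "\<And>x a c. (x,a)\<in>M \<Longrightarrow> (c *\<^sub>R x, c*a)\<in>M"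
   and bnd: "\<And>x a. (x,a)\<in>M \<Longrightarrow> a \<le> C * norm x" using ok unfolding hb_ok_def by blast+
  obtain p0 where p0: "p0 \<in> M" using ne by blast
  have zero: "(0,0) \<in> M" using scl[of "fst p0" "snd p0" 0] p0 by simp
  define L where "L = {a - C * norm (t - x0) | t a. (t,a)\<in>M}"
  have Lle: "l \<le> C * norm (s + x0) - b" if lL: "l \<in> L" and sb: "(s,b)\<in>M" for l s b
  proof -
    obtain t a where ta: "(t,a)\<in>M" "l = a - C * norm (t - x0)" using lL L_def by blast
    have "a + b \<le> C * norm (t + s)" using bnd[OF add[OF ta(1) sb]] .
    also have "norm (t + s) \<le> norm (t - x0) + norm (s + x0)"
      using norm_triangle_ineq[of "t - x0" "s + x0"] by simp
    hence "C * norm (t + s) \<le> C * norm (t - x0) + C * norm (s + x0)"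
      using C by (simp add: mult_left_mono[of _ _ C] distrib_left[symmetric])
    finally show ?thesis using ta by simp
  qed
  have Lne: "L \<noteq> {}" using zero L_def by blast
  have Lbdd: "bdd_above L" using Lle[OF _ zero] by (intro bdd_aboveI[of _ "C * norm x0"]) auto
  define c where "c = Sup L"
  have c1: "a - C * norm (t - x0) \<le> c" if "(t,a)\<in>M" for t a
    unfolding c_def using that L_def by (intro cSup_upper Lbdd) auto
  have c2: "c \<le> C * norm (s + x0) - b" if "(s,b)\<in>M" for s b
    unfolding c_def using Lle[OF _ that] Lne by (intro cSup_least) auto
  define M' where "M' = {(t + r *\<^sub>R x0, a + r * c) | t a r. (t,a)\<in>M}"
  have "hb_ok C M'"
    unfolding hb_ok_def
  proof (intro conjI allI impI)
    fix x a y b assume "(x,a)\<in>M'" "(y,b)\<in>M'"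
    then obtain t1 a1 r1 t2 a2 r2 where "(t1,a1)\<in>M" "(t2,a2)\<in>M" "x = t1 + r1 *\<^sub>R x0" "a = a1 + r1*c"
      "y = t2 + r2 *\<^sub>R x0" "b = a2 + r2*c" unfolding M'_def by blast
    hence "(x+y,a+b) = ((t1+t2) + (r1+r2) *\<^sub>R x0, (a1+a2) + (r1+r2)*c)" "(t1+t2,a1+a2)\<in>M"
      using add by (auto simp: algebra_simps)
    thus "(x+y,a+b)\<in>M'" unfolding M'_def by blast
  next
    fix x a d assume "(x,a)\<in>M'"
    then obtain t1 a1 r1 where "(t1,a1)\<in>M" "x = t1 + r1 *\<^sub>R x0" "a = a1 + r1*c" unfolding M'_def by blast
    hence "(d *\<^sub>R x, d*a) = (d *\<^sub>R t1 + (d*r1) *\<^sub>R x0, d*a1 + (d*r1)*c)" "(d *\<^sub>R t1, d*a1)\<in>M"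
      using scl by (auto simp: algebra_simps)
    thus "(d *\<^sub>R x, d*a)\<in>M'" unfolding M'_def by blast
  next
    fix x a assume "(x,a)\<in>M'"
    then obtain t a1 r where ta: "(t,a1)\<in>M" and xa: "x = t + r *\<^sub>R x0" "a = a1 + r*c" unfolding M'_def by blast
    consider "r = 0" | "r > 0" | "r < 0" by linarith
    thus "a \<le> C * norm x"
    proof cases
      case 1 thus ?thesis using bnd[OF ta] xa by simp
    next
      case 2
      have "c \<le> C * norm ((1/r) *\<^sub>R t + x0) - (1/r)*a1" using c2[OF scl[OF ta]] .
      hence "r * c \<le> r * (C * norm ((1/r) *\<^sub>R t + x0) - (1/r)*a1)" using 2 by simp
      also have "\<dots> = C * (r * norm ((1/r) *\<^sub>R t + x0)) - a1" using 2 by (simp add: algebra_simps)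
      also have "r * norm ((1/r) *\<^sub>R t + x0) = norm (r *\<^sub>R ((1/r) *\<^sub>R t + x0))" using 2 by simp
      also have "r *\<^sub>R ((1/r) *\<^sub>R t + x0) = x" using 2 xa by (simp add: algebra_simps)
      finally show ?thesis using xa by simp
    next
      case 3
      define q where "q = - r"
      have q: "q > 0" using 3 q_def by simp
      have "(1/q)*a1 - C * norm ((1/q) *\<^sub>R t - x0) \<le> c" using c1[OF scl[OF ta]] .
      hence "q * ((1/q)*a1 - C * norm ((1/q) *\<^sub>R t - x0)) \<le> q * c" using q by simp
      moreover have "q * ((1/q)*a1 - C * norm ((1/q) *\<^sub>R t - x0)) = a1 - C * (q * norm ((1/q) *\<^sub>R t - x0))"
        using q by (simp add: algebra_simps)
      moreover have "q * norm ((1/q) *\<^sub>R t - x0) = norm (q *\<^sub>R ((1/q) *\<^sub>R t - x0))" using q by simp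
      moreover have "q *\<^sub>R ((1/q) *\<^sub>R t - x0) = x" using q xa q_def by (simp add: algebra_simps)
      ultimately have "a1 - C * norm x \<le> q * c" by metis
      thus ?thesis using xa q_def by (simp add: algebra_simps)
    qed
  qed
  moreover have "M \<subseteq> M'" unfolding M'_def by force
  moreover have "(x0, c) \<in> M'" unfolding M'_def using zero by force
  ultimately show ?thesis using x0 by blast
qed

lemma hahn_banach_graph:
  fixes G0 :: "('a::real_normed_vector \<times> real) set"
  assumes ok: "hb_ok C G0" and ne: "G0 \<noteq> {}" and C: "0 \<le> C"
  shows "\<exists>\<phi>::'a \<Rightarrow>\<^sub>L real. norm \<phi> \<le> C \<and> (\<forall>(x,a)\<in>G0. blinfun_apply \<phi> x = a)"
proof -
  define A where "A = {G. G0 \<subseteq> G \<and> hb_ok C G}"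
  have "\<exists>M\<in>A. \<forall>X\<in>A. M \<subseteq> X \<longrightarrow> X = M"
  proof (rule Zorn_Lemma2, intro ballI)
    fix Ch assume Ch: "Ch \<in> chains A"
    show "\<exists>U\<in>A. \<forall>X\<in>Ch. X \<subseteq> U"
    proof (cases "Ch = {}")
      case True thus ?thesis using ok A_def by auto
    next
      case False
      have sub: "Ch \<subseteq> A" and ch: "\<And>X Y. X\<in>Ch \<Longrightarrow> Y\<in>Ch \<Longrightarrow> X \<subseteq> Y \<or> Y \<subseteq> X"
        using Ch unfolding chains_def chain_subset_def by blast+
      have "\<Union>Ch \<in> A" unfolding A_def hb_ok_def
      proof (intro CollectI conjI allI impI)
        show "G0 \<subseteq> \<Union>Ch" using False sub A_def by blast
      next
        fix x a y b assume "(x,a)\<in>\<Union>Ch" "(y,b)\<in>\<Union>Ch"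
        then obtain X Y where XY: "X\<in>Ch" "Y\<in>Ch" "(x,a)\<in>X" "(y,b)\<in>Y" by blast
        then consider "X \<subseteq> Y" | "Y \<subseteq> X" using ch by blast
        thus "(x+y,a+b)\<in>\<Union>Ch"
        proof cases
          case 1 thus ?thesis using XY sub A_def hb_ok_def by (metis (no_types, lifting) CollectD UnionI subsetD)
        next
          case 2 thus ?thesis using XY sub A_def hb_ok_def by (metis (no_types, lifting) CollectD UnionI subsetD)
        qed
      next
        fix x a d assume "(x,a)\<in>\<Union>Ch"
        then obtain X where "X\<in>Ch" "(x,a)\<in>X" by blast
        thus "(d *\<^sub>R x, d*a)\<in>\<Union>Ch" using sub A_def hb_ok_def by (metis (no_types, lifting) CollectD UnionI subsetD)
      next
        fix x a assume "(x,a)\<in>\<Union>Ch"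
        then obtain X where "X\<in>Ch" "(x,a)\<in>X" by blast
        thus "a \<le> C * norm x" using sub A_def hb_ok_def by (metis (no_types, lifting) CollectD subsetD)
      qed
      thus ?thesis by blast
    qed
  qed
  then obtain M where M: "M \<in> A" and max: "\<And>X. X\<in>A \<Longrightarrow> M \<subseteq> X \<Longrightarrow> X = M" by blast
  have okM: "hb_ok C M" and G0M: "G0 \<subseteq> M" using M A_def by auto
  have tot: "\<exists>a. (x,a)\<in>M" for x
  proof (rule ccontr)
    assume "\<not> ?thesis"
    then obtain M' where "hb_ok C M'" "M \<subseteq> M'" "M' \<noteq> M" using hb_extend[OF okM _ C] G0M ne by blast
    thus False using max[of M'] G0M A_def by auto
  qed
  define g where "g x = (THE a. (x,a)\<in>M)" for x
  have gM: "(x, g x) \<in> M" for x unfolding g_def using tot hb_ok_fun[OF okM] by (metis theI)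
  have gu: "(x,a)\<in>M \<Longrightarrow> g x = a" for x a using gM hb_ok_fun[OF okM] by blast
  have gadd: "g (x+y) = g x + g y" for x y using okM gM gu unfolding hb_ok_def by blast
  have gscl: "g (r *\<^sub>R x) = r * g x" for r x using okM gM gu unfolding hb_ok_def by blast
  have gb: "g x \<le> C * norm x" for x using okM gM unfolding hb_ok_def by blast
  have gabs: "norm (g x) \<le> C * norm x" for x
  proof -
    have "g (-x) = - g x" using gscl[of "-1" x] by simp
    thus ?thesis using gb[of x] gb[of "-x"] by (simp add: abs_le_iff)
  qed
  have bl: "bounded_linear g"
  proof (rule bounded_linear_intro[of _ C])
    fix x show "norm (g x) \<le> norm x * C" using gabs[of x] by (simp add: mult.commute)
  qed (use gadd gscl in auto)
  have "norm (Blinfun g) \<le> C"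
    by (rule norm_blinfun_bound[OF C]) (simp add: bounded_linear_Blinfun_apply[OF bl] gabs[unfolded real_norm_def])
  moreover have "\<forall>(x,a)\<in>G0. Blinfun g x = a"
    using G0M gu by (auto simp: bounded_linear_Blinfun_apply[OF bl])
  ultimately show ?thesis by blast
qed

lemma canon_apply[simp]: "blinfun_apply (canon_bidual x) \<phi> = blinfun_apply \<phi> x"
  unfolding canon_bidual_def
  by (simp add: bounded_linear_Blinfun_apply blinfun.bounded_linear_left)

lemma canon_add: "canon_bidual (x + y) = canon_bidual x + canon_bidual y"
  by (rule blinfun_eqI) (simp add: blinfun.add_right plus_blinfun.rep_eq)
lemma canon_diff: "canon_bidual (x - y) = canon_bidual x - canon_bidual y"
  by (rule blinfun_eqI) (simp add: blinfun.diff_right minus_blinfun.rep_eq)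
lemma canon_zero[simp]: "canon_bidual 0 = 0"
  by (rule blinfun_eqI) simp

lemma hb_norming:
  fixes x :: "'a::real_normed_vector"
  shows "\<exists>\<phi>::'a \<Rightarrow>\<^sub>L real. norm \<phi> \<le> 1 \<and> blinfun_apply \<phi> x = norm x"
proof -
  define G0 where "G0 = {(r *\<^sub>R x, r * norm x) | r. True}"
  have "hb_ok 1 G0" unfolding hb_ok_def G0_def
  proof (intro conjI allI impI)
    fix y a z b assume "(y,a) \<in> {(r *\<^sub>R x, r * norm x) | r. True}" "(z,b) \<in> {(r *\<^sub>R x, r * norm x) | r. True}"
    then obtain r s where "y = r *\<^sub>R x" "a = r * norm x" "z = s *\<^sub>R x" "b = s * norm x" by blast
    hence "(y+z, a+b) = ((r+s) *\<^sub>R x, (r+s) * norm x)" by (simp add: algebra_simps)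
    thus "(y+z, a+b) \<in> {(r *\<^sub>R x, r * norm x) | r. True}" by blast
  next
    fix y a c assume "(y,a) \<in> {(r *\<^sub>R x, r * norm x) | r. True}"
    then obtain r where "y = r *\<^sub>R x" "a = r * norm x" by blast
    hence "(c *\<^sub>R y, c*a) = ((c*r) *\<^sub>R x, (c*r) * norm x)" by simp
    thus "(c *\<^sub>R y, c*a) \<in> {(r *\<^sub>R x, r * norm x) | r. True}" by blast
  next
    fix y a assume "(y,a) \<in> {(r *\<^sub>R x, r * norm x) | r. True}"
    then obtain r where "y = r *\<^sub>R x" "a = r * norm x" by blast
    thus "a \<le> 1 * norm y" by (simp add: mult_right_mono)
  qed
  moreover have "G0 \<noteq> {}" unfolding G0_def by blast
  ultimately obtain \<phi> :: "'a \<Rightarrow>\<^sub>L real" where "norm \<phi> \<le> 1" "\<forall>(y,a)\<in>G0. \<phi> y = a"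
    using hahn_banach_graph[of 1 G0] by auto
  moreover have "(x, norm x) \<in> G0" unfolding G0_def by (auto intro!: exI[of _ 1])
  ultimately show ?thesis by auto
qed

lemma norm_canon[simp]: "norm (canon_bidual x) = norm x"
proof (rule antisym)
  show "norm (canon_bidual x) \<le> norm x"
  proof (rule norm_blinfun_bound)
    fix \<phi> :: "'a \<Rightarrow>\<^sub>L real"
    show "norm (blinfun_apply (canon_bidual x) \<phi>) \<le> norm x * norm \<phi>"
      using norm_blinfun[of \<phi> x] by (simp add: mult.commute)
  qed simp
  obtain \<phi> where \<phi>: "norm \<phi> \<le> 1" "blinfun_apply \<phi> x = norm x" using hb_norming by blast
  have "norm x = norm (blinfun_apply (canon_bidual x) \<phi>)" using \<phi> by simp
  also have "\<dots> \<le> norm (canon_bidual x) * norm \<phi>" by (rule norm_blinfun)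
  also have "\<dots> \<le> norm (canon_bidual x)" using \<phi> by (simp add: mult_left_le)
  finally show "norm x \<le> norm (canon_bidual x)" .
qed

lemma blinfun_norm_approx:
  fixes f :: "'c::real_normed_vector \<Rightarrow>\<^sub>L real"
  assumes e: "e > 0"
  shows "\<exists>\<theta>. norm \<theta> \<le> 1 \<and> blinfun_apply f \<theta> > norm f - e"
proof (rule ccontr)
  assume "\<not> ?thesis"
  hence H: "\<And>\<theta>. norm \<theta> \<le> 1 \<Longrightarrow> blinfun_apply f \<theta> \<le> norm f - e" by force
  have nn: "0 \<le> norm f - e" using H[of 0] by simp
  have "norm (blinfun_apply f \<theta>) \<le> (norm f - e) * norm \<theta>" for \<theta>
  proof (cases "\<theta> = 0")
    case True thus ?thesis by simp
  next
    case False
    let ?t = "(1 / norm \<theta>) *\<^sub>R \<theta>"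
    have n1: "norm ?t \<le> 1" "norm (- ?t) \<le> 1" using False by simp_all
    have "blinfun_apply f ?t = blinfun_apply f \<theta> / norm \<theta>"
      by (simp add: blinfun.scaleR_right)
    moreover have "blinfun_apply f (- ?t) = - (blinfun_apply f \<theta> / norm \<theta>)"
      by (simp add: blinfun.scaleR_right blinfun.minus_right)
    ultimately have "\<bar>blinfun_apply f \<theta> / norm \<theta>\<bar> \<le> norm f - e"
      using H[OF n1(1)] H[OF n1(2)] by (simp add: abs_le_iff)
    hence "\<bar>blinfun_apply f \<theta>\<bar> / norm \<theta> \<le> norm f - e" by simp
    thus ?thesis using False by (simp add: field_simps)
  qed
  hence "norm f \<le> norm f - e" by (rule norm_blinfun_bound[OF nn])
  thus False using e by simp
qed

lemma hb_separate:
  fixes x :: "'a::real_normed_vector"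
  assumes V: "subspace V" and e: "e > 0" and d: "\<forall>z\<in>V. e \<le> norm (x - z)"
  shows "\<exists>\<phi>::'a \<Rightarrow>\<^sub>L real. (\<forall>z\<in>V. blinfun_apply \<phi> z = 0) \<and> blinfun_apply \<phi> x = e"
proof -
  define G0 where "G0 = {(z + r *\<^sub>R x, r * e) | z r. z \<in> V}"
  have "hb_ok 1 G0" unfolding hb_ok_def
  proof (intro conjI allI impI)
    fix y a w b assume "(y,a) \<in> G0" "(w,b) \<in> G0"
    then obtain z1 r z2 s where "z1\<in>V" "z2\<in>V" "y = z1 + r *\<^sub>R x" "a = r * e" "w = z2 + s *\<^sub>R x" "b = s * e"
      unfolding G0_def by blast
    hence "(y+w, a+b) = ((z1+z2) + (r+s) *\<^sub>R x, (r+s) * e)" "z1+z2 \<in> V"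
      using V by (auto simp: algebra_simps subspace_add)
    thus "(y+w, a+b) \<in> G0" unfolding G0_def by blast
  next
    fix y a c assume "(y,a) \<in> G0"
    then obtain z r where "z\<in>V" "y = z + r *\<^sub>R x" "a = r * e" unfolding G0_def by blast
    hence "(c *\<^sub>R y, c*a) = (c *\<^sub>R z + (c*r) *\<^sub>R x, (c*r) * e)" "c *\<^sub>R z \<in> V"
      using V by (auto simp: algebra_simps subspace_scale)
    thus "(c *\<^sub>R y, c*a) \<in> G0" unfolding G0_def by blast
  next
    fix y a assume "(y,a) \<in> G0"
    then obtain z r where z: "z\<in>V" "y = z + r *\<^sub>R x" "a = r * e" unfolding G0_def by blast
    show "a \<le> 1 * norm y"
    proof (cases "r > 0")
      case False
      have "r * e \<le> 0" using False e by (simp add: mult_nonpos_nonneg)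
      thus ?thesis using z by (metis mult_1 norm_ge_zero order_trans)
    next
      case True
      have "- ((1/r) *\<^sub>R z) \<in> V" using V z by (simp add: subspace_neg subspace_scale)
      hence "e \<le> norm (x - (- ((1/r) *\<^sub>R z)))" using d by blast
      hence "r * e \<le> r * norm (x + (1/r) *\<^sub>R z)" using True by simp
      also have "r * norm (x + (1/r) *\<^sub>R z) = norm (r *\<^sub>R (x + (1/r) *\<^sub>R z))" using True by simp
      also have "r *\<^sub>R (x + (1/r) *\<^sub>R z) = y" using True z by (simp add: algebra_simps)
      finally show ?thesis using z by simp
    qed
  qed
  moreover have "(0, 0) \<in> G0" unfolding G0_def using V subspace_0 by force
  ultimately obtain \<phi> :: "'a \<Rightarrow>\<^sub>L real" where "\<forall>(y,a)\<in>G0. \<phi> y = a"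
    using hahn_banach_graph[of 1 G0] by auto
  moreover have "(z, 0) \<in> G0" if "z \<in> V" for z unfolding G0_def using that by force
  moreover have "(x, e) \<in> G0" unfolding G0_def using V subspace_0 by (force intro!: exI[of _ 0] exI[of _ 1])
  ultimately show ?thesis by fastforce
qed

lemma hb_Jext:
  fixes J :: "'b::real_normed_vector \<Rightarrow> 'a::real_normed_vector"
  assumes J: "linear J" "\<And>y. norm (J y) = norm y"
  shows "\<exists>\<phi>::'a \<Rightarrow>\<^sub>L real. norm \<phi> \<le> norm \<theta> \<and> (\<forall>b. blinfun_apply \<phi> (J b) = blinfun_apply \<theta> b)"
proof -
  define G0 where "G0 = {(J b, blinfun_apply \<theta> b) | b. True}"
  have "hb_ok (norm \<theta>) G0" unfolding hb_ok_def
  proof (intro conjI allI impI)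
    fix y a w c assume "(y,a) \<in> G0" "(w,c) \<in> G0"
    then obtain b1 b2 where "y = J b1" "a = \<theta> b1" "w = J b2" "c = \<theta> b2" unfolding G0_def by blast
    hence "(y+w, a+c) = (J (b1+b2), \<theta> (b1+b2))" using J by (simp add: linear_add blinfun.add_right)
    thus "(y+w, a+c) \<in> G0" unfolding G0_def by blast
  next
    fix y a c assume "(y,a) \<in> G0"
    then obtain b1 where "y = J b1" "a = \<theta> b1" unfolding G0_def by blast
    hence "(c *\<^sub>R y, c*a) = (J (c *\<^sub>R b1), \<theta> (c *\<^sub>R b1))" using J by (simp add: linear_scale blinfun.scaleR_right)
    thus "(c *\<^sub>R y, c*a) \<in> G0" unfolding G0_def by blast
  next
    fix y a assume "(y,a) \<in> G0"
    then obtain b1 where "y = J b1" "a = \<theta> b1" unfolding G0_def by blast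
    thus "a \<le> norm \<theta> * norm y" using J norm_blinfun[of \<theta> b1] by simp
  qed
  moreover have "G0 \<noteq> {}" unfolding G0_def by blast
  ultimately obtain \<phi> :: "'a \<Rightarrow>\<^sub>L real" where "norm \<phi> \<le> norm \<theta>" "\<forall>(y,a)\<in>G0. \<phi> y = a"
    using hahn_banach_graph[of "norm \<theta>" G0] by auto
  thus ?thesis unfolding G0_def by auto
qed

lemma hb_crux:
  fixes J :: "'b::real_normed_vector \<Rightarrow> 'a::real_normed_vector"
  assumes J: "linear J" "\<And>y. norm (J y) = norm y"
    and th: "norm \<theta> \<le> 1" and orth: "\<And>b. norm (J b + x0) = norm b + norm x0"
  shows "\<exists>\<phi>::'a \<Rightarrow>\<^sub>L real. norm \<phi> \<le> 1 \<and> (\<forall>b. blinfun_apply \<phi> (J b) = blinfun_apply \<theta> b)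
      \<and> blinfun_apply \<phi> x0 = norm x0"
proof -
  have orth2: "norm (J b + r *\<^sub>R x0) = norm b + \<bar>r\<bar> * norm x0" for b r
  proof (cases "r = 0")
    case True thus ?thesis using J by simp
  next
    case False
    have "J b + r *\<^sub>R x0 = r *\<^sub>R (J ((1/r) *\<^sub>R b) + x0)" using False J by (simp add: linear_scale algebra_simps)
    hence "norm (J b + r *\<^sub>R x0) = \<bar>r\<bar> * (norm ((1/r) *\<^sub>R b) + norm x0)" using orth by simp
    thus ?thesis using False by (simp add: algebra_simps)
  qed
  define G0 where "G0 = {(J b + r *\<^sub>R x0, blinfun_apply \<theta> b + r * norm x0) | b r. True}"
  have "hb_ok 1 G0" unfolding hb_ok_def
  proof (intro conjI allI impI)
    fix y a w c assume "(y,a) \<in> G0" "(w,c) \<in> G0"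
    then obtain b1 r1 b2 r2 where "y = J b1 + r1 *\<^sub>R x0" "a = \<theta> b1 + r1 * norm x0"
        "w = J b2 + r2 *\<^sub>R x0" "c = \<theta> b2 + r2 * norm x0" unfolding G0_def by blast
    hence "(y+w, a+c) = (J (b1+b2) + (r1+r2) *\<^sub>R x0, \<theta> (b1+b2) + (r1+r2) * norm x0)"
      using J by (simp add: linear_add blinfun.add_right algebra_simps)
    thus "(y+w, a+c) \<in> G0" unfolding G0_def by blast
  next
    fix y a c assume "(y,a) \<in> G0"
    then obtain b1 r1 where "y = J b1 + r1 *\<^sub>R x0" "a = \<theta> b1 + r1 * norm x0" unfolding G0_def by blast
    hence "(c *\<^sub>R y, c*a) = (J (c *\<^sub>R b1) + (c*r1) *\<^sub>R x0, \<theta> (c *\<^sub>R b1) + (c*r1) * norm x0)"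
      using J by (simp add: linear_scale blinfun.scaleR_right algebra_simps)
    thus "(c *\<^sub>R y, c*a) \<in> G0" unfolding G0_def by blast
  next
    fix y a assume "(y,a) \<in> G0"
    then obtain b1 r1 where ya: "y = J b1 + r1 *\<^sub>R x0" "a = \<theta> b1 + r1 * norm x0" unfolding G0_def by blast
    have "\<theta> b1 \<le> norm b1"
      using norm_blinfun[of \<theta> b1] th mult_right_mono[OF th, of "norm b1"] by simp
    moreover have "r1 * norm x0 \<le> \<bar>r1\<bar> * norm x0" by (simp add: mult_right_mono)
    ultimately show "a \<le> 1 * norm y" using ya orth2 by simp
  qed
  moreover have "G0 \<noteq> {}" unfolding G0_def by blast
  ultimately obtain \<phi> :: "'a \<Rightarrow>\<^sub>L real" where \<phi>: "norm \<phi> \<le> 1" "\<forall>(y,a)\<in>G0. \<phi> y = a"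
    using hahn_banach_graph[of 1 G0] by auto
  have "(J b, \<theta> b) \<in> G0" for b
  proof -
    have "(J b, \<theta> b) = (J b + 0 *\<^sub>R x0, \<theta> b + 0 * norm x0)" by simp
    thus ?thesis unfolding G0_def by blast
  qed
  moreover have "(x0, norm x0) \<in> G0"
  proof -
    have "(x0, norm x0) = (J 0 + 1 *\<^sub>R x0, \<theta> 0 + 1 * norm x0)" using J by (simp add: linear_0)
    thus ?thesis unfolding G0_def by blast
  qed
  ultimately show ?thesis using \<phi> by fastforce
qed

definition dualT :: "('b::real_normed_vector \<Rightarrow> 'a::real_normed_vector) \<Rightarrow> ('a \<Rightarrow>\<^sub>L real) \<Rightarrow>\<^sub>L ('b \<Rightarrow>\<^sub>L real)" where
  "dualT J = Blinfun (\<lambda>\<phi>. \<phi> o\<^sub>L Blinfun J)"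

definition Jss :: "('b::real_normed_vector \<Rightarrow> 'a::real_normed_vector) \<Rightarrow> (('b \<Rightarrow>\<^sub>L real) \<Rightarrow>\<^sub>L real) \<Rightarrow> (('a \<Rightarrow>\<^sub>L real) \<Rightarrow>\<^sub>L real)" where
  "Jss J \<eta> = \<eta> o\<^sub>L dualT J"

lemma dualT_apply: "blinfun_apply (dualT J) \<phi> = \<phi> o\<^sub>L Blinfun J"
  unfolding dualT_def
  by (simp add: bounded_linear_Blinfun_apply bounded_bilinear.bounded_linear_left[OF bounded_bilinear_blinfun_compose])

lemma iso_bl: assumes "linear J" "\<And>y. norm (J y) = norm y" shows "bounded_linear J"
  by (rule bounded_linear_intro[of _ 1]) (auto simp: linear_add[OF assms(1)] linear_scale[OF assms(1)] assms(2))

lemma BJ_apply: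
  assumes "linear J" "\<And>y. norm (J y) = norm y"
  shows "blinfun_apply (Blinfun J) = J"
  using iso_bl[OF assms] by (simp add: bounded_linear_Blinfun_apply)

lemma compJ_apply:
  assumes "linear J" "\<And>y. norm (J y) = norm y"
  shows "blinfun_apply (\<phi> o\<^sub>L Blinfun J) b = blinfun_apply \<phi> (J b)"
  using iso_bl[OF assms] by (simp add: bounded_linear_Blinfun_apply)

lemma Jss_apply:
  "blinfun_apply (Jss J \<eta>) \<phi> = blinfun_apply \<eta> (\<phi> o\<^sub>L Blinfun J)"
  unfolding Jss_def by (simp add: dualT_apply)

lemma Jss_canon:
  assumes "linear J" "\<And>y. norm (J y) = norm y"
  shows "Jss J (canon_bidual b) = canon_bidual (J b)"
  by (rule blinfun_eqI) (simp add: Jss_apply compJ_apply[OF assms] BJ_apply[OF assms])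

lemma Jss_add: "Jss J (a + b) = Jss J a + Jss J b"
  by (rule blinfun_eqI) (simp add: Jss_apply plus_blinfun.rep_eq)
lemma Jss_diff: "Jss J (a - b) = Jss J a - Jss J b"
  by (rule blinfun_eqI) (simp add: Jss_apply minus_blinfun.rep_eq)

lemma norm_Jss:
  fixes J :: "'b::real_normed_vector \<Rightarrow> 'a::real_normed_vector"
  assumes J: "linear J" "\<And>y. norm (J y) = norm y"
  shows "norm (Jss J \<eta>) = norm \<eta>"
proof (rule antisym)
  have H: "norm (\<phi> o\<^sub>L Blinfun J) \<le> norm \<phi>" for \<phi> :: "_ \<Rightarrow>\<^sub>L real"
  proof (rule norm_blinfun_bound)
    fix b show "norm (blinfun_apply (\<phi> o\<^sub>L Blinfun J) b) \<le> norm \<phi> * norm b"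
      using norm_blinfun[of \<phi> "J b"] J by (simp add: compJ_apply[OF J] BJ_apply[OF J])
  qed simp
  have "norm (dualT J) \<le> 1"
    by (rule norm_blinfun_bound) (simp_all add: dualT_apply H del: blinfun_apply_blinfun_compose)
  thus "norm (Jss J \<eta>) \<le> norm \<eta>" unfolding Jss_def
    using norm_blinfun_compose[of \<eta> "dualT J"] mult_left_le[of "norm (dualT J)" "norm \<eta>"]
    by (meson norm_ge_zero order_trans)
next
  show "norm \<eta> \<le> norm (Jss J \<eta>)"
  proof (rule norm_blinfun_bound)
    fix \<theta> :: "'b \<Rightarrow>\<^sub>L real"
    obtain \<phi> where \<phi>: "norm \<phi> \<le> norm \<theta>" "\<forall>b. blinfun_apply \<phi> (J b) = blinfun_apply \<theta> b"
      using hb_Jext[OF J, of \<theta>] by blast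
    have "\<phi> o\<^sub>L Blinfun J = \<theta>" by (rule blinfun_eqI) (simp add: compJ_apply[OF J] BJ_apply[OF J] \<phi>)
    hence "blinfun_apply \<eta> \<theta> = blinfun_apply (Jss J \<eta>) \<phi>" by (simp add: Jss_apply)
    hence "norm (blinfun_apply \<eta> \<theta>) \<le> norm (Jss J \<eta>) * norm \<phi>" using norm_blinfun by metis
    also have "\<dots> \<le> norm (Jss J \<eta>) * norm \<theta>" using \<phi> by (simp add: mult_left_mono)
    finally show "norm (blinfun_apply \<eta> \<theta>) \<le> norm (Jss J \<eta>) * norm \<theta>" .
  qed simp
qed

lemma Lproj_canon:
  assumes "L_projection P" "range P = range canon_bidual"
  shows "P (canon_bidual x) = canon_bidual x"
proof -
  obtain z where "canon_bidual x = P z" using assms(2) by (metis rangeE rangeI)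
  thus ?thesis using assms(1) unfolding L_projection_def by metis
qed

lemma Lproj_ex:
  assumes "range P = range canon_bidual"
  shows "\<exists>x. P z = canon_bidual x"
  using assms by (metis rangeE rangeI)

lemma crux:
  fixes J :: "'b::banach \<Rightarrow> 'a::banach"
  assumes J: "linear J" "\<And>y. norm (J y) = norm y"
    and P: "L_projection P" "range P = range (canon_bidual :: 'a \<Rightarrow> _)"
    and Q: "L_projection Q" "range Q = range (canon_bidual :: 'b \<Rightarrow> _)"
    and t: "Q t = 0"
  shows "P (Jss J t) = 0"
proof -
  have linP: "linear P" and nP: "\<And>z. norm z = norm (P z) + norm (z - P z)" using P(1) unfolding L_projection_def by blast+
  have linQ: "linear Q" and nQ: "\<And>z. norm z = norm (Q z) + norm (z - Q z)" using Q(1) unfolding L_projection_def by blast+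
  define w where "w = Jss J t"
  obtain x0 where x0: "P w = canon_bidual x0" using Lproj_ex[OF P(2)] by blast
  define s where "s = w - P w"
  have nw: "norm w = norm x0 + norm s" using nP[of w] x0 s_def by simp
  have nwt: "norm w = norm t" using norm_Jss[OF J] w_def by simp
  have orth: "norm (J b + x0) = norm b + norm x0" for b
  proof -
    define z where "z = canon_bidual b + t"
    have "Q z = canon_bidual b" using linQ t Lproj_canon[OF Q] z_def by (simp add: linear_add)
    hence nz: "norm z = norm b + norm t" using nQ[of z] z_def by simp
    have Jz: "Jss J z = canon_bidual (J b) + w" unfolding z_def w_def by (simp add: Jss_add Jss_canon[OF J])
    have PJz: "P (Jss J z) = canon_bidual (J b + x0)"
      using Jz linP x0 Lproj_canon[OF P] by (simp add: linear_add canon_add)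
    have "Jss J z - P (Jss J z) = s" using Jz PJz s_def x0 by (simp add: canon_add)
    hence "norm (Jss J z) = norm (J b + x0) + norm s" using nP[of "Jss J z"] PJz by simp
    thus ?thesis using nz norm_Jss[OF J, of z] nw nwt by simp
  qed
  show ?thesis
  proof (cases "x0 = 0")
    case True thus ?thesis using x0 w_def by simp
  next
    case False
    hence e: "norm x0 > 0" by simp
    obtain \<theta>0 where \<theta>0: "norm \<theta>0 \<le> 1" "blinfun_apply t \<theta>0 > norm t - norm x0"
      using blinfun_norm_approx[OF e, of t] by blast
    define \<theta> where "\<theta> = - \<theta>0"
    have th: "norm \<theta> \<le> 1" "blinfun_apply t \<theta> < - norm t + norm x0"
      using \<theta>0 by (auto simp: \<theta>_def blinfun.minus_right)
    obtain \<phi> where \<phi>: "norm \<phi> \<le> 1" "\<forall>b. blinfun_apply \<phi> (J b) = blinfun_apply \<theta> b" "blinfun_apply \<phi> x0 = norm x0"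
      using hb_crux[OF J th(1) orth] by blast
    have "\<phi> o\<^sub>L Blinfun J = \<theta>" by (rule blinfun_eqI) (simp add: compJ_apply[OF J] BJ_apply[OF J] \<phi>)
    hence wphi: "blinfun_apply w \<phi> = blinfun_apply t \<theta>" by (simp add: w_def Jss_apply)
    have "w = P w + s" using s_def by simp
    hence "blinfun_apply w \<phi> = norm x0 + blinfun_apply s \<phi>" using x0 \<phi>(3) by (simp add: plus_blinfun.rep_eq)
    moreover have "\<bar>blinfun_apply s \<phi>\<bar> \<le> norm s"
      using norm_blinfun[of s \<phi>] \<phi>(1) mult_left_le[of "norm \<phi>" "norm s"] by simp
    ultimately have False using wphi th nw nwt e by linarith
    thus ?thesis by simp
  qed
qed

definition wcluster :: "(nat \<Rightarrow> ('c::real_normed_vector \<Rightarrow>\<^sub>L real) \<Rightarrow>\<^sub>L real) \<Rightarrow> (('c \<Rightarrow>\<^sub>L real) \<Rightarrow>\<^sub>L real) \<Rightarrow> bool" where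
  "wcluster g \<eta> \<longleftrightarrow> (\<forall>\<Phi> e m. finite \<Phi> \<longrightarrow> e > 0 \<longrightarrow>
      (\<exists>n\<ge>m. \<forall>\<theta>\<in>\<Phi>. \<bar>blinfun_apply (g n) \<theta> - blinfun_apply \<eta> \<theta>\<bar> < e))"

lemma alaoglu_cluster:
  fixes g :: "nat \<Rightarrow> ('c::real_normed_vector \<Rightarrow>\<^sub>L real) \<Rightarrow>\<^sub>L real"
  assumes R: "\<And>n. norm (g n) \<le> R"
  shows "\<exists>\<eta>. wcluster g \<eta>"
proof -
  define K where "K = PiE UNIV (\<lambda>\<theta>::'c \<Rightarrow>\<^sub>L real. cball (0::real) (R * norm \<theta>))"
  have cK: "compact K" unfolding K_def
    using compactin_PiE[of "\<lambda>_. euclidean" UNIV "\<lambda>\<theta>::'c \<Rightarrow>\<^sub>L real. cball (0::real) (R * norm \<theta>)"]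
    by (simp add: euclidean_product_topology)
  define h where "h n = blinfun_apply (g n)" for n
  have hK: "h n \<in> K" for n
  proof -
    have "\<bar>blinfun_apply (g n) \<theta>\<bar> \<le> R * norm \<theta>" for \<theta>
      using norm_blinfun[of "g n" \<theta>] R[of n] mult_right_mono[OF R[of n], of "norm \<theta>"] by simp
    thus ?thesis unfolding K_def h_def by (simp add: PiE_iff dist_real_def)
  qed
  define F where "F = range (\<lambda>m. closure (h ` {m..}))"
  have "K \<inter> \<Inter>F \<noteq> {}"
  proof (rule compact_imp_fip[OF cK])
    show "\<And>T. T \<in> F \<Longrightarrow> closed T" unfolding F_def by auto
  next
    fix F' assume F': "finite F'" "F' \<subseteq> F"
    then obtain M where M: "F' \<subseteq> (\<lambda>m. closure (h ` {m..})) ` {..M}"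
    proof -
      obtain I where "finite I" "F' = (\<lambda>m. closure (h ` {m..})) ` I"
        using F' unfolding F_def by (meson finite_subset_image)
      moreover have "I \<subseteq> {..Max (insert 0 I)}" using calculation(1) by auto
      ultimately show ?thesis using that by blast
    qed
    have "h M \<in> K \<inter> \<Inter>F'"
      using M hK by (force intro: closure_subset[THEN subsetD])
    thus "K \<inter> \<Inter>F' \<noteq> {}" by blast
  qed
  then obtain p where pK: "p \<in> K" and pF: "\<And>m. p \<in> closure (h ` {m..})" unfolding F_def by blast
  have cont: "continuous_on UNIV (\<lambda>q::('c \<Rightarrow>\<^sub>L real) \<Rightarrow> real. q a)" for a by simp
  have padd: "p (a + b) = p a + p b" for a b
  proof -
    have cl: "closed {q::('c \<Rightarrow>\<^sub>L real) \<Rightarrow> real. q (a+b) = q a + q b}"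
      by (rule closed_Collect_eq) (intro continuous_intros cont)+
    have "h ` {0..} \<subseteq> {q. q (a+b) = q a + q b}" by (auto simp: h_def blinfun.add_right)
    hence "closure (h ` {0..}) \<subseteq> {q. q (a+b) = q a + q b}" using cl by (rule closure_minimal)
    thus ?thesis using pF[of 0] by blast
  qed
  have pscl: "p (c *\<^sub>R a) = c *\<^sub>R p a" for a c
  proof -
    have cl: "closed {q::('c \<Rightarrow>\<^sub>L real) \<Rightarrow> real. q (c *\<^sub>R a) = c *\<^sub>R q a}"
      by (rule closed_Collect_eq) (intro continuous_intros cont)+
    have "h ` {0..} \<subseteq> {q. q (c *\<^sub>R a) = c *\<^sub>R q a}" by (auto simp: h_def blinfun.scaleR_right)
    hence "closure (h ` {0..}) \<subseteq> {q. q (c *\<^sub>R a) = c *\<^sub>R q a}" using cl by (rule closure_minimal)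
    thus ?thesis using pF[of 0] by blast
  qed
  have pb: "norm (p \<theta>) \<le> norm \<theta> * R" for \<theta>
    using pK unfolding K_def by (auto simp: PiE_iff dist_real_def mult.commute)
  have blp: "bounded_linear p"
    by (rule bounded_linear_intro[OF padd pscl pb])
  define \<eta> where "\<eta> = Blinfun p"
  have ep: "blinfun_apply \<eta> = p" unfolding \<eta>_def using blp by (simp add: bounded_linear_Blinfun_apply)
  have "wcluster g \<eta>" unfolding wcluster_def
  proof (intro allI impI)
    fix \<Phi> :: "('c \<Rightarrow>\<^sub>L real) set" and e :: real and m :: nat
    assume \<Phi>: "finite \<Phi>" and e: "e > 0"
    define Ow where "Ow = {q::('c \<Rightarrow>\<^sub>L real) \<Rightarrow> real. \<forall>\<theta>\<in>\<Phi>. q (id \<theta>) \<in> ball (p \<theta>) e}"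
    have "open Ow" unfolding Ow_def by (rule product_topology_basis'[OF \<Phi>]) simp
    moreover have "p \<in> Ow" unfolding Ow_def using e by simp
    ultimately have "Ow \<inter> h ` {m..} \<noteq> {}" using pF[of m] open_Int_closure_eq_empty[of Ow "h ` {m..}"] by blast
    then obtain n where "n \<ge> m" "h n \<in> Ow" by blast
    thus "\<exists>n\<ge>m. \<forall>\<theta>\<in>\<Phi>. \<bar>blinfun_apply (g n) \<theta> - blinfun_apply \<eta> \<theta>\<bar> < e"
      unfolding Ow_def h_def ep by (auto simp: dist_real_def abs_minus_commute)
  qed
  thus ?thesis by blast
qed

lemma F_cwmc_parts:
  assumes "F_cwmc N f"
  shows "\<And>a. a \<in> cone N \<Longrightarrow> 0 \<le> f a"
    and "\<And>a b. a \<in> cone N \<Longrightarrow> b \<in> cone N \<Longrightarrow> (\<forall>i<N. a i \<le> b i) \<Longrightarrow> f a \<le> f b"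
    and "\<And>a b. a \<in> cone N \<Longrightarrow> b \<in> cone N \<Longrightarrow> (\<forall>i<N. a i < b i) \<Longrightarrow> f a < f b"
    and "\<And>M. \<exists>R. \<forall>a\<in>cone N. (\<exists>i<N. R \<le> a i) \<longrightarrow> M \<le> f a"
  using assms unfolding F_cwmc_def by blast+

lemma rvec_cone: "(\<lambda>i. if i < length xs then norm (x - xs ! i) else 0) \<in> cone (length xs)"
  unfolding cone_def by auto

lemma rad_le:
  assumes "F_cwmc (length xs) f" "y \<in> Y"
  shows "rad_f f Y xs \<le> r_f f y xs"
proof -
  have "bdd_below ((\<lambda>y. r_f f y xs) ` Y)"
    using F_cwmc_parts(1)[OF assms(1) rvec_cone] unfolding r_f_def by (intro bdd_belowI[of _ 0]) auto
  thus ?thesis unfolding rad_f_def using assms(2) by (rule cINF_lower)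
qed

lemma min_bounded:
  fixes J :: "'b::real_normed_vector \<Rightarrow> 'a::real_normed_vector"
  assumes J: "\<And>y. norm (J y) = norm y"
    and F: "F_cwmc (length xs) f" and ne: "xs \<noteq> []"
    and lim: "(\<lambda>n. r_f f (J (v n)) xs) \<longlonglongrightarrow> L"
  shows "\<exists>R. \<forall>n. norm (v n) \<le> R"
proof -
  obtain R0 where R0: "\<forall>a\<in>cone (length xs). (\<exists>i<length xs. R0 \<le> a i) \<longrightarrow> L + 1 \<le> f a"
    using F_cwmc_parts(4)[OF F, of "L+1"] by blast
  have "eventually (\<lambda>n. r_f f (J (v n)) xs < L + 1) sequentially"
    using lim by (rule order_tendstoD) simp
  then obtain n0 where n0: "\<And>n. n \<ge> n0 \<Longrightarrow> r_f f (J (v n)) xs < L + 1"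
    unfolding eventually_sequentially by blast
  have big: "norm (v n) \<le> R0 + norm (xs ! 0)" if "n \<ge> n0" for n
  proof (rule ccontr)
    assume "\<not> ?thesis"
    hence "R0 < norm (J (v n)) - norm (xs ! 0)" using J by simp
    also have "\<dots> \<le> norm (J (v n) - xs ! 0)" by (rule norm_triangle_ineq2)
    finally have "R0 \<le> norm (J (v n) - xs ! 0)" by simp
    hence "\<exists>i<length xs. R0 \<le> (\<lambda>i. if i < length xs then norm (J (v n) - xs ! i) else 0) i"
      using ne by (intro exI[of _ 0]) auto
    hence "L + 1 \<le> f (\<lambda>i. if i < length xs then norm (J (v n) - xs ! i) else 0)"
      using R0 rvec_cone[of xs "J (v n)"] by (rule_tac bspec[OF R0, rule_format]) auto
    hence "L + 1 \<le> r_f f (J (v n)) xs" unfolding r_f_def .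
    thus False using n0[OF that] by simp
  qed
  define R where "R = R0 + norm (xs ! 0) + (\<Sum>n<n0. norm (v n))"
  have "norm (v n) \<le> R" for n
  proof (cases "n \<ge> n0")
    case True thus ?thesis using big[OF True] unfolding R_def
      by (smt (verit) sum_nonneg norm_ge_zero)
  next
    case False
    hence "norm (v n) \<le> (\<Sum>n<n0. norm (v n))" by (intro member_le_sum) auto
    moreover have "0 \<le> R0 + norm (xs ! 0)"
      using big[of n0] norm_ge_zero[of "v n0"] by linarith
    ultimately show ?thesis unfolding R_def by simp
  qed
  thus ?thesis by blast
qed

lemma cluster_in_canon:
  fixes J :: "'b::banach \<Rightarrow> 'a::banach" and xs :: "'a list" and v :: "nat \<Rightarrow> 'b"
  assumes J: "linear J" "\<And>y. norm (J y) = norm y"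
    and P: "L_projection P" "range P = range (canon_bidual :: 'a \<Rightarrow> _)"
    and Q: "L_projection Q" "range Q = range (canon_bidual :: 'b \<Rightarrow> _)"
    and F: "F_cwmc (length xs) f" and ne: "xs \<noteq> []"
    and lim: "(\<lambda>n. r_f f (J (v n)) xs) \<longlonglongrightarrow> rad_f f (range J) xs"
    and cl: "wcluster (\<lambda>n. canon_bidual (v n)) \<eta>"
  shows "Q \<eta> = \<eta>"
proof (rule ccontr)
  assume neq: "Q \<eta> \<noteq> \<eta>"
  define N where "N = length xs"
  define rad where "rad = rad_f f (range J) xs"
  have linP: "linear P" and nP: "\<And>z. norm z = norm (P z) + norm (z - P z)" using P(1) unfolding L_projection_def by blast+
  have linQ: "linear Q" and idQ: "\<And>z. Q (Q z) = Q z" using Q(1) unfolding L_projection_def by blast+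
  obtain y where y: "Q \<eta> = canon_bidual y" using Lproj_ex[OF Q(2)] by blast
  define t where "t = \<eta> - Q \<eta>"
  have Qt: "Q t = 0" unfolding t_def using linQ idQ by (simp add: linear_diff)
  define \<delta> where "\<delta> = norm t"
  have dpos: "\<delta> > 0" using neq t_def \<delta>_def by simp
  define w where "w = Jss J t"
  have Pw: "P w = 0" unfolding w_def by (rule crux[OF J P Q Qt])
  have nw: "norm w = \<delta>" unfolding w_def \<delta>_def by (rule norm_Jss[OF J])
  have Jeta: "Jss J \<eta> = canon_bidual (J y) + w"
  proof -
    have "\<eta> = canon_bidual y + t" using t_def y by simp
    thus ?thesis unfolding w_def by (metis Jss_add Jss_canon[OF J])
  qed
  define z where "z i = Jss J \<eta> - canon_bidual (xs ! i)" for i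
  have nz: "norm (z i) = norm (J y - xs ! i) + \<delta>" for i
  proof -
    have zi: "z i = canon_bidual (J y - xs ! i) + w" unfolding z_def Jeta by (simp add: canon_diff)
    have "P (z i) = canon_bidual (J y - xs ! i)" unfolding zi using linP Pw Lproj_canon[OF P] by (simp add: linear_add)
    thus ?thesis using nP[of "z i"] zi nw by simp
  qed
  have "\<forall>i. \<exists>\<phi>. norm \<phi> \<le> 1 \<and> blinfun_apply (z i) \<phi> > norm (z i) - \<delta>/4"
    using blinfun_norm_approx dpos by (metis zero_less_divide_iff zero_less_numeral)
  then obtain \<phi> where \<phi>: "\<And>i. norm (\<phi> i) \<le> 1" "\<And>i. blinfun_apply (z i) (\<phi> i) > norm (z i) - \<delta>/4" by metis
  have zphi: "blinfun_apply (z i) (\<phi> i) = blinfun_apply \<eta> (\<phi> i o\<^sub>L Blinfun J) - blinfun_apply (\<phi> i) (xs ! i)" for i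
    unfolding z_def by (simp add: Jss_apply minus_blinfun.rep_eq)
  define \<Phi> where "\<Phi> = (\<lambda>i. \<phi> i o\<^sub>L Blinfun J) ` {..<N}"
  have fin: "finite \<Phi>" unfolding \<Phi>_def by simp
  have e4: "\<delta>/4 > 0" using dpos by simp
  have freq: "\<exists>n\<ge>m. \<forall>\<theta>\<in>\<Phi>. \<bar>blinfun_apply (canon_bidual (v n)) \<theta> - blinfun_apply \<eta> \<theta>\<bar> < \<delta>/4" for m
    using cl[unfolded wcluster_def, rule_format, OF fin e4] by blast
  define a where "a = (\<lambda>i. if i < N then norm (J y - xs ! i) else 0)"
  define a' where "a' = (\<lambda>i. if i < N then norm (J y - xs ! i) + \<delta>/2 else 0)"
  define an where "an n = (\<lambda>i. if i < N then norm (J (v n) - xs ! i) else 0)" for n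
  have cone: "a \<in> cone N" "a' \<in> cone N" "an n \<in> cone N" for n
    unfolding a_def a'_def an_def cone_def using dpos by auto
  have fa: "f a < f a'" using F_cwmc_parts(3)[OF F[folded N_def] cone(1,2)] dpos unfolding a_def a'_def by simp
  have rf: "r_f f x xs = f (\<lambda>i. if i < N then norm (x - xs ! i) else 0)" for x
    unfolding r_f_def N_def by simp
  have fa'n: "\<exists>n\<ge>m. f a' \<le> r_f f (J (v n)) xs" for m
  proof -
    obtain n where n: "n \<ge> m" "\<forall>\<theta>\<in>\<Phi>. \<bar>blinfun_apply (canon_bidual (v n)) \<theta> - blinfun_apply \<eta> \<theta>\<bar> < \<delta>/4"
      using freq by blast
    have "a' i \<le> an n i" if "i < N" for i
    proof -
      have "\<bar>blinfun_apply (\<phi> i) (J (v n)) - blinfun_apply \<eta> (\<phi> i o\<^sub>L Blinfun J)\<bar> < \<delta>/4"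
        using n(2) that unfolding \<Phi>_def by (auto simp: compJ_apply[OF J] BJ_apply[OF J])
      hence "blinfun_apply (\<phi> i) (J (v n)) > blinfun_apply \<eta> (\<phi> i o\<^sub>L Blinfun J) - \<delta>/4"
        by (simp only: abs_less_iff) linarith
      moreover have "blinfun_apply (\<phi> i) (J (v n) - xs ! i) \<le> norm (J (v n) - xs ! i)"
        using norm_blinfun[of "\<phi> i" "J (v n) - xs ! i"] \<phi>(1)[of i]
          mult_right_mono[OF \<phi>(1)[of i], of "norm (J (v n) - xs ! i)"] by simp
      moreover have "blinfun_apply (\<phi> i) (J (v n) - xs ! i) = blinfun_apply (\<phi> i) (J (v n)) - blinfun_apply (\<phi> i) (xs ! i)"
        by (simp add: blinfun.diff_right)
      ultimately have "norm (J y - xs ! i) + \<delta>/2 \<le> norm (J (v n) - xs ! i)"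
        using \<phi>(2)[of i] zphi[of i] nz[of i] by linarith
      thus ?thesis using that unfolding a'_def an_def by simp
    qed
    hence "f a' \<le> f (an n)" using F_cwmc_parts(2)[OF F[folded N_def] cone(2,3)] by blast
    thus ?thesis using n(1) rf unfolding an_def by auto
  qed
  have "f a' \<le> rad"
  proof (rule ccontr)
    assume "\<not> f a' \<le> rad"
    hence "eventually (\<lambda>n. r_f f (J (v n)) xs < f a') sequentially"
      using lim unfolding rad_def by (intro order_tendstoD) auto
    then obtain m where "\<And>n. n \<ge> m \<Longrightarrow> r_f f (J (v n)) xs < f a'" unfolding eventually_sequentially by blast
    thus False using fa'n[of m] by force
  qed
  moreover have "rad \<le> f a" using rad_le[OF F, of "J y" "range J"] rf unfolding rad_def a_def by simp
  ultimately show False using fa by simp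
qed

lemma cluster_limit:
  fixes w :: "nat \<Rightarrow> 'b::banach" and \<theta> :: "'b \<Rightarrow>\<^sub>L real"
  assumes cl: "wcluster (\<lambda>n. canon_bidual (w n)) (canon_bidual x)"
    and lim: "(\<lambda>n. blinfun_apply \<theta> (w n)) \<longlonglongrightarrow> L"
  shows "blinfun_apply \<theta> x = L"
proof (rule ccontr)
  assume ne: "blinfun_apply \<theta> x \<noteq> L"
  define e where "e = \<bar>blinfun_apply \<theta> x - L\<bar>"
  have e: "e/2 > 0" using ne e_def by simp
  have "eventually (\<lambda>n. dist (blinfun_apply \<theta> (w n)) L < e/2) sequentially"
    using lim e by (rule tendstoD)
  then obtain m where m: "\<And>n. n \<ge> m \<Longrightarrow> \<bar>blinfun_apply \<theta> (w n) - L\<bar> < e/2"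
    unfolding eventually_sequentially dist_real_def by blast
  obtain n where "n \<ge> m" "\<bar>blinfun_apply \<theta> (w n) - blinfun_apply \<theta> x\<bar> < e/2"
    using cl[unfolded wcluster_def, rule_format, of "{\<theta>}" "e/2" m] e by auto
  thus False using m[of n] e_def by linarith
qed

lemma cluster_in_closure:
  fixes w :: "nat \<Rightarrow> 'b::banach"
  assumes V: "subspace V" and wV: "\<And>n. w n \<in> V"
    and cl: "wcluster (\<lambda>n. canon_bidual (w n)) (canon_bidual x)"
  shows "x \<in> closure V"
proof (rule ccontr)
  assume "x \<notin> closure V"
  then obtain e where e: "e > 0" "ball x e \<subseteq> - closure V"
    using open_contains_ball[of "- closure V"] by blast
  have d: "\<forall>z\<in>V. e \<le> norm (x - z)"
  proof
    fix z assume "z \<in> V"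
    hence "z \<notin> ball x e" using e closure_subset by blast
    thus "e \<le> norm (x - z)" by (simp add: dist_norm)
  qed
  obtain \<phi> where \<phi>: "\<forall>z\<in>V. blinfun_apply \<phi> z = 0" "blinfun_apply \<phi> x = e"
    using hb_separate[OF V e(1) d] by blast
  obtain n where "\<bar>blinfun_apply \<phi> (w n) - blinfun_apply \<phi> x\<bar> < e"
    using cl[unfolded wcluster_def, rule_format, of "{\<phi>}" e 0] e by auto
  thus False using \<phi> wV by simp
qed

definition Dset :: "(nat \<Rightarrow> 'b::real_normed_vector) \<Rightarrow> 'b set" where
  "Dset v = {\<Sum>k<m. of_rat (q k) *\<^sub>R v k | m q. True}"

lemma Dset_countable: "countable (Dset v)"
proof -
  have "Dset v \<subseteq> range (\<lambda>qs::rat list. \<Sum>k<length qs. of_rat (qs ! k) *\<^sub>R v k)"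
  proof
    fix d assume "d \<in> Dset v"
    then obtain m q where d: "d = (\<Sum>k<m. of_rat (q k) *\<^sub>R v k)" unfolding Dset_def by blast
    have "d = (\<Sum>k<length (map q [0..<m]). of_rat (map q [0..<m] ! k) *\<^sub>R v k)"
      unfolding d by (intro sum.cong) auto
    thus "d \<in> range (\<lambda>qs::rat list. \<Sum>k<length qs. of_rat (qs ! k) *\<^sub>R v k)" by blast
  qed
  thus ?thesis by (rule countable_subset) simp
qed

lemma Dset_ne: "Dset v \<noteq> {}"
  unfolding Dset_def by blast

lemma Dset_add:
  assumes "d \<in> Dset v"
  shows "d + of_rat r *\<^sub>R v j \<in> Dset v"
proof -
  obtain m q where d: "d = (\<Sum>k<m. of_rat (q k) *\<^sub>R v k)" using assms unfolding Dset_def by blast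
  define M where "M = max m (Suc j)"
  define q' where "q' k = (if k < m then q k else 0) + (if k = j then r else 0)" for k
  have "(\<Sum>k<M. of_rat (q' k) *\<^sub>R v k)
      = (\<Sum>k<M. of_rat (if k < m then q k else 0) *\<^sub>R v k) + (\<Sum>k<M. of_rat (if k = j then r else 0) *\<^sub>R v k)"
    unfolding q'_def by (simp add: of_rat_add scaleR_add_left sum.distrib)
  also have "(\<Sum>k<M. of_rat (if k < m then q k else 0) *\<^sub>R v k) = (\<Sum>k<m. of_rat (q k) *\<^sub>R v k)"
  proof -
    have "(\<Sum>k<M. of_rat (if k < m then q k else 0) *\<^sub>R v k) = (\<Sum>k<m. of_rat (if k < m then q k else 0) *\<^sub>R v k)"
      by (rule sum.mono_neutral_right) (auto simp: M_def)
    also have "\<dots> = (\<Sum>k<m. of_rat (q k) *\<^sub>R v k)" by (rule sum.cong) auto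
    finally show ?thesis by simp
  qed
  also have "(\<Sum>k<M. of_rat (if k = j then r else 0) *\<^sub>R v k) = of_rat r *\<^sub>R v j"
  proof -
    have "(\<Sum>k<M. of_rat (if k = j then r else 0) *\<^sub>R v k) = (\<Sum>k<M. if k = j then of_rat r *\<^sub>R v j else 0)"
      by (rule sum.cong) auto
    also have "\<dots> = of_rat r *\<^sub>R v j"
    proof -
      have jM: "j \<in> {..<M}" unfolding M_def by simp
      show ?thesis by (simp only: sum.delta finite_lessThan jM if_True)
    qed
    finally show ?thesis .
  qed
  finally show ?thesis unfolding Dset_def d by (metis (mono_tags, lifting) mem_Collect_eq)
qed

lemma Dset_dense:
  assumes "e \<in> span (range v)"
  shows "\<forall>\<epsilon>>0. \<exists>d\<in>Dset v. norm (e - d) < \<epsilon>"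
  using assms
proof (induction rule: span_induct_alt)
  case base
  have "0 \<in> Dset v" unfolding Dset_def mem_Collect_eq
    by (rule exI[of _ 0], rule exI[of _ "\<lambda>_. 0"]) simp
  thus ?case by force
next
  case (step c x y)
  then obtain j where x: "x = v j" by blast
  show ?case
  proof (intro allI impI)
    fix \<epsilon> :: real assume \<epsilon>: "\<epsilon> > 0"
    obtain d where d: "d \<in> Dset v" "norm (y - d) < \<epsilon>/2" using step.IH \<epsilon> by (meson half_gt_zero)
    obtain r :: rat where r: "\<bar>c - of_rat r\<bar> * norm x < \<epsilon>/2"
    proof (cases "x = 0")
      case True thus ?thesis using that[of 0] \<epsilon> by simp
    next
      case False
      hence nx: "norm x > 0" by simp
      obtain r :: rat where "c - \<epsilon>/2/norm x < of_rat r \<and> of_rat r < c + \<epsilon>/2/norm x"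
        using of_rat_dense[of "c - \<epsilon>/2/norm x" "c + \<epsilon>/2/norm x"] \<epsilon> nx by auto
      hence "\<bar>c - of_rat r\<bar> < \<epsilon>/2/norm x" by auto
      hence "\<bar>c - of_rat r\<bar> * norm x < \<epsilon>/2" using nx by (simp add: pos_less_divide_eq)
      thus ?thesis using that by blast
    qed
    have "d + of_rat r *\<^sub>R v j \<in> Dset v" using Dset_add[OF d(1)] .
    moreover have "norm (c *\<^sub>R x + y - (d + of_rat r *\<^sub>R v j)) < \<epsilon>"
    proof -
      have "c *\<^sub>R x + y - (d + of_rat r *\<^sub>R v j) = (c - of_rat r) *\<^sub>R x + (y - d)"
        using x by (simp add: algebra_simps)
      hence "norm (c *\<^sub>R x + y - (d + of_rat r *\<^sub>R v j)) \<le> \<bar>c - of_rat r\<bar> * norm x + norm (y - d)"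
        by (metis norm_scaleR norm_triangle_ineq)
      thus ?thesis using r d by linarith
    qed
    ultimately show "\<exists>d\<in>Dset v. norm (c *\<^sub>R x + y - d) < \<epsilon>" by blast
  qed
qed

lemma Dset_span: "Dset v \<subseteq> span (range v)"
proof
  fix d assume "d \<in> Dset v"
  then obtain m q where d: "d = (\<Sum>k<m. of_rat (q k) *\<^sub>R v k)" unfolding Dset_def by blast
  show "d \<in> span (range v)" unfolding d
    by (rule span_sum, rule span_scale, rule span_base) auto
qed

lemma es_extract:
  fixes v :: "nat \<Rightarrow> 'b::banach"
  assumes bnd: "\<And>n. norm (v n) \<le> R"
    and H: "\<And>s \<eta>. strict_mono s \<Longrightarrow> wcluster (\<lambda>n. canon_bidual (v (s n))) \<eta> \<Longrightarrow> \<exists>x. \<eta> = canon_bidual x"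
  shows "\<exists>s x. strict_mono s \<and> weakly_converges_to (v \<circ> s) x"
proof -
  define V where "V = span (range v)"
  have subV: "subspace V" unfolding V_def by simp
  have vV: "v n \<in> V" for n unfolding V_def by (simp add: span_base)
  have "\<forall>d. \<exists>\<phi>::'b \<Rightarrow>\<^sub>L real. norm \<phi> \<le> 1 \<and> blinfun_apply \<phi> d = norm d" using hb_norming by blast
  then obtain \<Theta>d :: "'b \<Rightarrow> 'b \<Rightarrow>\<^sub>L real" where \<Theta>d: "\<And>d. norm (\<Theta>d d) \<le> 1" "\<And>d. blinfun_apply (\<Theta>d d) d = norm d"
    by metis
  define en where "en = from_nat_into (Dset v)"
  have ren: "range en = Dset v" unfolding en_def by (rule range_from_nat_into[OF Dset_ne Dset_countable])
  define \<Theta> where "\<Theta> k = \<Theta>d (en k)" for k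
  have \<Theta>b: "\<bar>blinfun_apply (\<Theta> k) b\<bar> \<le> norm b" for k b
    using norm_blinfun[of "\<Theta> k" b] \<Theta>d(1)[of "en k"] mult_right_mono[OF \<Theta>d(1)[of "en k"], of "norm b"]
    unfolding \<Theta>_def by simp
  have sep: "x = x2" if x: "x \<in> closure V" and x2: "x2 \<in> closure V" and eq: "\<And>k. blinfun_apply (\<Theta> k) x = blinfun_apply (\<Theta> k) x2" for x x2
  proof -
    have small: "norm (x2 - x) < 6 * \<epsilon>" if \<epsilon>: "\<epsilon> > 0" for \<epsilon>
    proof -
      obtain e1 where e1: "e1 \<in> V" "dist x e1 < \<epsilon>" using closure_approachableD[OF x \<epsilon>] by blast
      obtain e2 where e2: "e2 \<in> V" "dist x2 e2 < \<epsilon>" using closure_approachableD[OF x2 \<epsilon>] by blast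
      have "e2 - e1 \<in> span (range v)" using e1 e2 subV V_def by (simp add: subspace_diff)
      then obtain d where d: "d \<in> Dset v" "norm (e2 - e1 - d) < \<epsilon>" using Dset_dense \<epsilon> by blast
      obtain k where k: "d = en k" using d(1) ren by blast
      have "norm d = blinfun_apply (\<Theta> k) d" using \<Theta>d(2) k \<Theta>_def by simp
      also have "\<dots> = blinfun_apply (\<Theta> k) (d - (x2 - x))" using eq[of k] by (simp add: blinfun.diff_right)
      also have "\<dots> \<le> norm (d - (x2 - x))" using \<Theta>b by (meson abs_le_D1)
      finally have nd: "norm d \<le> norm (d - (x2 - x))" .
      have "norm (d - (x2 - x)) \<le> norm (e2 - e1 - d) + norm (x2 - e2) + norm (x - e1)"
      proof -
        have eqn: "d - (x2 - x) = - (e2 - e1 - d) - (x2 - e2) + (x - e1)" by (simp add: algebra_simps)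
        have "norm (d - (x2 - x)) \<le> norm (- (e2 - e1 - d) - (x2 - e2)) + norm (x - e1)"
          unfolding eqn by (rule norm_triangle_ineq)
        also have "\<dots> \<le> norm (- (e2 - e1 - d)) + norm (x2 - e2) + norm (x - e1)"
          using norm_triangle_ineq4[of "- (e2 - e1 - d)" "x2 - e2"] by linarith
        also have "norm (- (e2 - e1 - d)) = norm (e2 - e1 - d)" by (rule norm_minus_cancel)
        finally show ?thesis .
      qed
      moreover have "norm (x2 - e2) < \<epsilon>" "norm (x - e1) < \<epsilon>" using e1 e2 by (simp_all add: dist_norm)
      ultimately have a: "norm (d - (x2 - x)) < 3 * \<epsilon>" using d by linarith
      have "norm (x2 - x) \<le> norm (d - (x2 - x)) + norm d"
        using norm_triangle_ineq4[of d "d - (x2 - x)"] by simp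
      thus ?thesis using a nd by linarith
    qed
    show ?thesis
    proof (rule ccontr)
      assume "x \<noteq> x2"
      hence "norm (x2 - x) / 6 > 0" by simp
      from small[OF this] show False by simp
    qed
  qed
  interpret S: subseqs "\<lambda>k s. convergent (\<lambda>n. blinfun_apply (\<Theta> k) (v (s n)))"
  proof (unfold_locales)
    fix k and s :: "nat \<Rightarrow> nat" assume "strict_mono s"
    obtain f where f: "strict_mono f" "monoseq (\<lambda>n. blinfun_apply (\<Theta> k) (v (s (f n))))"
      using seq_monosub[of "\<lambda>n. blinfun_apply (\<Theta> k) (v (s n))"] by (auto simp: comp_def)
    have "Bseq (\<lambda>n. blinfun_apply (\<Theta> k) (v (s (f n))))"
    proof (rule BseqI'[of _ R])
      fix n show "norm (blinfun_apply (\<Theta> k) (v (s (f n)))) \<le> R"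
        using \<Theta>b[of k "v (s (f n))"] bnd[of "s (f n)"] by simp
    qed
    hence "convergent (\<lambda>n. blinfun_apply (\<Theta> k) (v (s (f n))))" using f(2) Bseq_monoseq_convergent by blast
    hence "strict_mono f \<and> convergent (\<lambda>n. blinfun_apply (\<Theta> k) (v ((s \<circ> f) n)))" using f(1) by (simp add: comp_def)
    thus "\<exists>r'. strict_mono r' \<and> convergent (\<lambda>n. blinfun_apply (\<Theta> k) (v ((s \<circ> r') n)))" by blast
  qed
  define r where "r = S.diagseq"
  have rmono: "strict_mono r" unfolding r_def by (rule S.subseq_diagseq)
  have conv: "convergent (\<lambda>n. blinfun_apply (\<Theta> k) (v (r n)))" for k
  proof -
    have "convergent (\<lambda>n. blinfun_apply (\<Theta> k) (v ((S.diagseq \<circ> (+) (Suc k)) n)))"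
    proof (rule S.diagseq_holds)
      fix r' s :: "nat \<Rightarrow> nat" and n :: nat assume "strict_mono r'" "convergent (\<lambda>m. blinfun_apply (\<Theta> n) (v (s m)))"
      thus "convergent (\<lambda>m. blinfun_apply (\<Theta> n) (v ((s \<circ> r') m)))"
        using convergent_subseq_convergent[of "\<lambda>m. blinfun_apply (\<Theta> n) (v (s m))" r'] by (simp add: comp_def)
    qed
    then obtain L where L: "(\<lambda>n. blinfun_apply (\<Theta> k) (v ((S.diagseq \<circ> (+) (Suc k)) n))) \<longlonglongrightarrow> L"
      unfolding convergent_def by blast
    have "(\<lambda>n. blinfun_apply (\<Theta> k) (v ((S.diagseq \<circ> (+) (Suc k)) n))) = (\<lambda>n. blinfun_apply (\<Theta> k) (v (S.diagseq (n + Suc k))))"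
      by (rule ext) (simp add: add.commute)
    with L have "(\<lambda>n. blinfun_apply (\<Theta> k) (v (S.diagseq (n + Suc k)))) \<longlonglongrightarrow> L" by simp
    hence "(\<lambda>n. blinfun_apply (\<Theta> k) (v (S.diagseq n))) \<longlonglongrightarrow> L" by (rule LIMSEQ_offset)
    thus ?thesis unfolding r_def convergent_def by blast
  qed
  define w where "w = v \<circ> r"
  have wV: "w n \<in> V" for n unfolding w_def using vV by simp
  have "\<And>n. norm (canon_bidual (v (r n))) \<le> R" using bnd by simp
  then obtain \<eta> where "wcluster (\<lambda>n. canon_bidual (v (r n))) \<eta>"
    using alaoglu_cluster[of "\<lambda>n. canon_bidual (v (r n))" R] by blast
  then obtain x where "wcluster (\<lambda>n. canon_bidual (v (r n))) (canon_bidual x)"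
    using H[OF rmono] by blast
  hence clx: "wcluster (\<lambda>n. canon_bidual (w n)) (canon_bidual x)" unfolding w_def comp_def .
  have xV: "x \<in> closure V" using cluster_in_closure[OF subV wV clx] .
  have "weakly_converges_to w x"
    unfolding weakly_converges_to_def
  proof (rule allI, rule ccontr)
    fix \<phi> :: "'b \<Rightarrow>\<^sub>L real"
    assume "\<not> (\<lambda>n. blinfun_apply \<phi> (w n)) \<longlonglongrightarrow> blinfun_apply \<phi> x"
    hence "\<not> (\<forall>e>0. \<exists>no. \<forall>n\<ge>no. norm (blinfun_apply \<phi> (w n) - blinfun_apply \<phi> x) < e)"
      unfolding LIMSEQ_iff .
    hence "\<exists>e>0. \<forall>no. \<exists>n\<ge>no. e \<le> \<bar>blinfun_apply \<phi> (w n) - blinfun_apply \<phi> x\<bar>"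
      by (simp add: not_less)
    then obtain e where e: "e > 0" and fr: "\<And>no. \<exists>n\<ge>no. e \<le> \<bar>blinfun_apply \<phi> (w n) - blinfun_apply \<phi> x\<bar>"
      by blast
    define Sn where "Sn = {n. e \<le> \<bar>blinfun_apply \<phi> (w n) - blinfun_apply \<phi> x\<bar>}"
    have inf: "infinite Sn" unfolding Sn_def infinite_nat_iff_unbounded_le using fr by blast
    define r2 where "r2 = enumerate Sn"
    have r2: "strict_mono r2" "\<And>n. r2 n \<in> Sn" unfolding r2_def using strict_mono_enumerate[OF inf] enumerate_in_set[OF inf] by auto
    define w2 where "w2 = w \<circ> r2"
    have rr2: "strict_mono (r \<circ> r2)" using rmono r2(1) by (rule strict_mono_o)
    have "\<And>n. norm (canon_bidual (v ((r \<circ> r2) n))) \<le> R" using bnd by simp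
    then obtain \<eta>2 where "wcluster (\<lambda>n. canon_bidual (v ((r \<circ> r2) n))) \<eta>2"
      using alaoglu_cluster[of "\<lambda>n. canon_bidual (v ((r \<circ> r2) n))" R] by blast
    then obtain x2 where "wcluster (\<lambda>n. canon_bidual (v ((r \<circ> r2) n))) (canon_bidual x2)"
      using H[OF rr2] by blast
    hence clx2: "wcluster (\<lambda>n. canon_bidual (w2 n)) (canon_bidual x2)" unfolding w2_def w_def comp_def .
    have x2V: "x2 \<in> closure V" using cluster_in_closure[OF subV _ clx2] wV unfolding w2_def by simp
    have "blinfun_apply (\<Theta> k) x = blinfun_apply (\<Theta> k) x2" for k
    proof -
      obtain L where L: "(\<lambda>n. blinfun_apply (\<Theta> k) (w n)) \<longlonglongrightarrow> L" using conv[of k] unfolding convergent_def w_def by auto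
      have L2: "(\<lambda>n. blinfun_apply (\<Theta> k) (w2 n)) \<longlonglongrightarrow> L"
        using LIMSEQ_subseq_LIMSEQ[OF L r2(1)] unfolding w2_def by (simp add: comp_def)
      show ?thesis using cluster_limit[OF clx L] cluster_limit[OF clx2 L2] by simp
    qed
    hence "x = x2" using sep xV x2V by blast
    obtain n where "\<bar>blinfun_apply \<phi> (w2 n) - blinfun_apply \<phi> x2\<bar> < e"
      using clx2[unfolded wcluster_def, rule_format, of "{\<phi>}" e 0] e by auto
    thus False using r2(2)[of n] \<open>x = x2\<close> unfolding Sn_def w2_def by auto
  qed
  thus ?thesis using rmono unfolding w_def by blast
qed

theorem theorem3p8:
  fixes J :: "'b::banach \<Rightarrow> 'a::banach"
  assumes "L_embedded TYPE('a)"
    and "linear J" and "\<And>y. norm (J y) = norm y"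
    and "L_embedded TYPE('b)"
  shows "weak_cwmc_SACP (range J)"
proof -
  have J: "linear J" "\<And>y. norm (J y) = norm y" using assms(2,3) by auto
  obtain P :: "(('a \<Rightarrow>\<^sub>L real) \<Rightarrow>\<^sub>L real) \<Rightarrow> (('a \<Rightarrow>\<^sub>L real) \<Rightarrow>\<^sub>L real)"
    where P: "L_projection P" "range P = range (canon_bidual :: 'a \<Rightarrow> _)"
    using assms(1) unfolding L_embedded_def by blast
  obtain Q :: "(('b \<Rightarrow>\<^sub>L real) \<Rightarrow>\<^sub>L real) \<Rightarrow> (('b \<Rightarrow>\<^sub>L real) \<Rightarrow>\<^sub>L real)"
    where Q: "L_projection Q" "range Q = range (canon_bidual :: 'b \<Rightarrow> _)"
    using assms(4) unfolding L_embedded_def by blast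
  show ?thesis unfolding weak_cwmc_SACP_def
  proof (intro allI impI)
    fix xs :: "'a list" and f and u :: "nat \<Rightarrow> 'a"
    assume A: "xs \<noteq> [] \<and> distinct xs \<and> F_cwmc (length xs) f \<and> (\<forall>n. u n \<in> range J)
        \<and> (\<lambda>n. r_f f (u n) xs) \<longlonglongrightarrow> rad_f f (range J) xs"
    have ne: "xs \<noteq> []" and F: "F_cwmc (length xs) f" using A by auto
    have "\<forall>n. \<exists>b. u n = J b" using A by blast
    then obtain v where v: "\<And>n. u n = J (v n)" by metis
    have lim: "(\<lambda>n. r_f f (J (v n)) xs) \<longlonglongrightarrow> rad_f f (range J) xs" using A v by simp
    obtain R where R: "\<And>n. norm (v n) \<le> R" using min_bounded[OF J(2) F ne lim] by blast
    have H: "\<exists>x. \<eta> = canon_bidual x"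
      if s: "strict_mono s" and cl: "wcluster (\<lambda>n. canon_bidual (v (s n))) \<eta>" for s \<eta>
    proof -
      have "((\<lambda>n. r_f f (J (v n)) xs) \<circ> s) \<longlonglongrightarrow> rad_f f (range J) xs"
        using LIMSEQ_subseq_LIMSEQ[OF lim s] .
      hence lims: "(\<lambda>n. r_f f (J (v (s n))) xs) \<longlonglongrightarrow> rad_f f (range J) xs" by (simp add: comp_def)
      have "Q \<eta> = \<eta>" using cluster_in_canon[OF J P Q F ne lims cl] .
      hence "\<eta> \<in> range Q" by (metis rangeI)
      thus ?thesis using Q(2) by auto
    qed
    have "\<exists>s x. strict_mono s \<and> weakly_converges_to (v \<circ> s) x"
    proof (rule es_extract[of v R])
      show "\<And>n. norm (v n) \<le> R" by (rule R)
      show "\<And>s \<eta>. strict_mono s \<Longrightarrow> wcluster (\<lambda>n. canon_bidual (v (s n))) \<eta> \<Longrightarrow> \<exists>x. \<eta> = canon_bidual x"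
        by (rule H)
    qed
    then obtain s x where s: "strict_mono s" and wc: "weakly_converges_to (v \<circ> s) x" by blast
    have "weakly_converges_to (u \<circ> s) (J x)"
      unfolding weakly_converges_to_def
    proof
      fix \<phi> :: "'a \<Rightarrow>\<^sub>L real"
      have "(\<lambda>n. blinfun_apply (\<phi> o\<^sub>L Blinfun J) ((v \<circ> s) n)) \<longlonglongrightarrow> blinfun_apply (\<phi> o\<^sub>L Blinfun J) x"
        using wc unfolding weakly_converges_to_def by blast
      thus "(\<lambda>n. blinfun_apply \<phi> ((u \<circ> s) n)) \<longlonglongrightarrow> blinfun_apply \<phi> (J x)"
        by (simp add: compJ_apply[OF J] BJ_apply[OF J] v del: blinfun_apply_blinfun_compose)
    qed
    thus "\<exists>s x. strict_mono s \<and> weakly_converges_to (u \<circ> s) x" using s by blast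
  qed
qed

end
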